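(* Consider the system $\dot x=f(x)+Bw$, $z=Cx$ with the standing assumptions below, and a finite set of matrices $\mathcal A=\{A_1,\dots,A_k\}\subset\mathbb{R}^{n\times n}$ such that $\partial f(x)\in\operatorname{conv}\mathcal A$ for all $x\in\mathbb{R}^n$. Suppose $\eta_w,\eta_z\in\mathbb{R}$, $V\in\mathbb{R}^{n\times m}$, $P\in\mathbb{R}^{m\times 2n_w}$, and $M_1,\dots,M_k\in\mathbb{R}^{m\times m}$ satisfy (i) $P\ge 0$, $[B,\,-B]=VP$, $\eta_w\mathbf 1^T=\mathbf 1^TP$; (ii) $\eta_z>0$ and, for every $i\in\{1,\dots,k\}$: all off-diagonal entries of $M_i$ are nonnegative, $A_iV=VM_i$, and $-\eta_z\hat z_V=\mathbf 1^TM_i$, where $\hat z_V=[\,|CV_1|_1,\dots,|CV_m|_1\,]$ is the row vector whose $j$-th entry is the 1-norm of $C$ times the $j$-th column $V_j$ of $V$; and suppose the convex hull of the columns of $V$ is compact with $0$ in its interior. Let $\psi=\psi_{\mathcal V}/\eta_z$ and $\gamma_1=\eta_w/\eta_z$. Then for all $x_1,x_2\in\mathbb{R}^n$ and $w_1,w_2\in\mathbb{R}^{n_w}$, $$D^+\psi\big(x_1-x_2;\ f(x_1)-f(x_2)+B(w_1-w_2)\big)\le -|C(x_1-x_2)|_1+\gamma_1|w_1-w_2|_1,$$ and consequently the incremental $\mathcal L_1$ gain of the system is at most $\eta_w/\eta_z$: for any two inputs $w_1,w_2$ with $w_1-w_2\in\mathcal L_1$, the corresponding outputs (from $x_1(0)=x_2(0)=0$)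 satisfy $\|z_1-z_2\|_1\le (\eta_w/\eta_z)\|w_1-w_2\|_1$.
   Context: Standing assumptions: $f:\mathbb{R}^n\to\mathbb{R}^n$ is continuously differentiable with Jacobian $\partial f(x)$; $B\in\mathbb{R}^{n\times n_w}$, $C\in\mathbb{R}^{n_z\times n}$; every input signal $w$ yields a solution defined for all $t\ge0$ with $x(0)=0$, and $z=Cx$. $\operatorname{conv}\mathcal A=\{\sum_i\lambda_iA_i:\lambda_i\ge0,\sum_i\lambda_i=1\}$. $\mathbf 1$ is the all-ones vector; inequalities on matrices/vectors are entrywise. $|v|_1=\sum_i|v_i|$; $\|w\|_1=\int_0^\infty|w(t)|_1dt$, and $w\in\mathcal L_1$ iff $\|w\|_1<\infty$. The polyhedral gauge function is $\psi_{\mathcal V}(x)=\min_{p}\{\mathbf 1^Tp : x=Vp,\ p\ge0\}=\max_h\{h^Tx: h^TV\le\mathbf 1^T\}$. For a convex function $\psi$, $D^+\psi(x;v)=\lim_{h\downarrow0}(\psi(x+hv)-\psi(x))/h$ is its directional derivative at $x$ in direction $v$. *)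

theory Defs
  imports "HOL-Analysis.Analysis"
begin

definition l1norm :: "real ^ 'n \<Rightarrow> real" where
  "l1norm v = (\<Sum>i\<in>UNIV. \<bar>v $ i\<bar>)"

definition poly_gauge :: "real ^ 'm ^ 'n \<Rightarrow> real ^ 'n \<Rightarrow> real" where
  "poly_gauge V x = Inf {(\<Sum>i\<in>UNIV. p $ i) | p. (\<forall>i. 0 \<le> p $ i) \<and> V *v p = x}"

definition Dplus :: "(real ^ 'n \<Rightarrow> real) \<Rightarrow> real ^ 'n \<Rightarrow> real ^ 'n \<Rightarrow> real" where
  "Dplus psi x v = Lim (at_right 0) (\<lambda>h. (psi (x + h *\<^sub>R v) - psi x) / h)"

definition blockBmB :: "real ^ 'w ^ 'n \<Rightarrow> real ^ ('w + 'w) ^ 'n" where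
  "blockBmB B = (\<chi> i j. case j of Inl a \<Rightarrow> B $ i $ a | Inr a \<Rightarrow> - (B $ i $ a))"

text \<open>A (Caratheodory) solution of x' = f(x) + B w on [0,oo) with x(0) = 0:
  x(t) is the Lebesgue integral of f(x(s)) + B w(s) over [0,t] for every t >= 0.\<close>
definition is_solution ::
  "(real ^ 'n \<Rightarrow> real ^ 'n) \<Rightarrow> real ^ 'w ^ 'n \<Rightarrow> (real \<Rightarrow> real ^ 'w) \<Rightarrow> (real \<Rightarrow> real ^ 'n) \<Rightarrow> bool"
  where
  "is_solution f B w x \<longleftrightarrow> x 0 = 0 \<and>
     (\<forall>t\<ge>0. (\<lambda>s. f (x s) + B *v w s) absolutely_integrable_on {0..t} \<and>
             ((\<lambda>s. f (x s) + B *v w s) has_integral x t) {0..t})"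

end

theory Submission
  imports Defs
begin


definition feas :: "real ^ 'm ^ 'n \<Rightarrow> real ^ 'n \<Rightarrow> real ^ 'm \<Rightarrow> bool" where
  "feas V x p \<longleftrightarrow> (\<forall>i. 0 \<le> p $ i) \<and> V *v p = x"

lemma pg_alt: "poly_gauge V x = Inf ((\<lambda>p. \<Sum>i\<in>UNIV. p $ i) ` {p. feas V x p})"
  unfolding poly_gauge_def feas_def by (rule arg_cong[where f=Inf]) auto

lemma pg_le: assumes "feas V x p" shows "poly_gauge V x \<le> (\<Sum>i\<in>UNIV. p $ i)"
  unfolding pg_alt
proof (rule cInf_lower)
  show "(\<Sum>i\<in>UNIV. p $ i) \<in> (\<lambda>p. \<Sum>i\<in>UNIV. p $ i) ` {p. feas V x p}" using assms by auto
  show "bdd_below ((\<lambda>p. \<Sum>i\<in>UNIV. p $ i) ` {p. feas V x p})"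
    by (rule bdd_belowI[of _ 0]) (auto simp: feas_def intro: sum_nonneg)
qed

lemma pg_ge: assumes "\<exists>p. feas V x p" "\<And>p. feas V x p \<Longrightarrow> c \<le> (\<Sum>i\<in>UNIV. p $ i)"
  shows "c \<le> poly_gauge V x"
  unfolding pg_alt using assms by (intro cInf_greatest) auto

lemma pg_nonneg: assumes "\<exists>p. feas V x p" shows "0 \<le> poly_gauge V x"
  using assms by (intro pg_ge) (auto simp: feas_def intro: sum_nonneg)

lemma pg_approx: assumes "\<exists>p. feas V x p" "e > 0"
  shows "\<exists>p. feas V x p \<and> (\<Sum>i\<in>UNIV. p $ i) < poly_gauge V x + e"
proof (rule ccontr)
  assume "\<not> ?thesis"
  then have "poly_gauge V x + e \<le> poly_gauge V x"
    using assms by (intro pg_ge) (auto simp: not_less)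
  then show False using assms by simp
qed

lemma pg_comb:
  assumes surj: "\<And>x. \<exists>p. feas V x p" and a: "a \<ge> 0" and b: "b \<ge> 0"
  shows "poly_gauge V (a *\<^sub>R x + b *\<^sub>R y) \<le> a * poly_gauge V x + b * poly_gauge V y"
proof (rule field_le_epsilon)
  fix e :: real assume e: "e > 0"
  define e' where "e' = e / (a + b + 1)"
  have e': "e' > 0" using e a b by (simp add: e'_def)
  obtain p where p: "feas V x p" "(\<Sum>i\<in>UNIV. p $ i) < poly_gauge V x + e'"
    using pg_approx[OF surj e'] by blast
  obtain q where q: "feas V y q" "(\<Sum>i\<in>UNIV. q $ i) < poly_gauge V y + e'"
    using pg_approx[OF surj e'] by blast
  have "feas V (a *\<^sub>R x + b *\<^sub>R y) (a *\<^sub>R p + b *\<^sub>R q)"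
    using p(1) q(1) a b unfolding feas_def by (auto simp: algebra_simps)
  then have "poly_gauge V (a *\<^sub>R x + b *\<^sub>R y) \<le> (\<Sum>i\<in>UNIV. (a *\<^sub>R p + b *\<^sub>R q) $ i)"
    by (rule pg_le)
  also have "\<dots> = a * (\<Sum>i\<in>UNIV. p $ i) + b * (\<Sum>i\<in>UNIV. q $ i)"
    by (simp add: sum.distrib sum_distrib_left)
  also have "\<dots> \<le> a * (poly_gauge V x + e') + b * (poly_gauge V y + e')"
    using p(2) q(2) a b by (intro add_mono mult_left_mono) auto
  also have "\<dots> \<le> a * poly_gauge V x + b * poly_gauge V y + e"
  proof -
    have "(a + b) * e' \<le> e" using e a b unfolding e'_def by (simp add: field_simps)
    then show ?thesis by (simp add: algebra_simps)
  qed
  finally show "poly_gauge V (a *\<^sub>R x + b *\<^sub>R y) \<le> a * poly_gauge V x + b * poly_gauge V y + e" .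
qed

lemma pg_sub:
  assumes surj: "\<And>x. \<exists>p. feas V x p"
  shows "poly_gauge V (x + y) \<le> poly_gauge V x + poly_gauge V y"
  using pg_comb[OF surj, of 1 1 x y] by simp

lemma pg_hom:
  assumes surj: "\<And>x. \<exists>p. feas V x p" and "a \<ge> 0"
  shows "poly_gauge V (a *\<^sub>R x) \<le> a * poly_gauge V x"
  using pg_comb[OF surj, of a 0 x x] assms by simp

lemma pg_zero: assumes surj: "\<And>x. \<exists>p. feas V x p" shows "poly_gauge V 0 = 0"
proof -
  have "feas V 0 0" by (simp add: feas_def)
  from pg_le[OF this] pg_nonneg[OF surj] show ?thesis by (auto intro: antisym)
qed



lemma hull_K: fixes V :: "real^'m^'n" shows "convex hull (range (\<lambda>j. column j V)) \<subseteq> {y. \<exists>p. feas V y p \<and> (\<Sum>i\<in>UNIV. p $ i) = 1}"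
proof (rule hull_minimal)
  show "range (\<lambda>j. column j V) \<subseteq> {y. \<exists>p. feas V y p \<and> (\<Sum>i\<in>UNIV. p $ i) = 1}"
  proof clarify
    fix j
    have "feas V (column j V) (axis j 1)"
      unfolding feas_def matrix_vector_mult_basis by (simp add: axis_def)
    moreover have "(\<Sum>i\<in>UNIV. (axis j 1 :: real^'m) $ i) = 1"
      by (simp add: axis_def)
    ultimately show "\<exists>p. feas V (column j V) p \<and> (\<Sum>i\<in>UNIV. p $ i) = 1" by blast
  qed
  show "convex {y. \<exists>p. feas V y p \<and> (\<Sum>i\<in>UNIV. p $ i) = 1}"
    unfolding convex_def
  proof (intro ballI allI impI)
    fix x y and u v :: real
    assume "x \<in> {y. \<exists>p. feas V y p \<and> (\<Sum>i\<in>UNIV. p $ i) = 1}" "y \<in> {y. \<exists>p. feas V y p \<and> (\<Sum>i\<in>UNIV. p $ i) = 1}"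
    then obtain p q where p: "feas V x p" "(\<Sum>i\<in>UNIV. p $ i) = 1" and q: "feas V y q" "(\<Sum>i\<in>UNIV. q $ i) = 1"
      by blast
    assume uv: "0 \<le> u" "0 \<le> v" "u + v = 1"
    have "feas V (u *\<^sub>R x + v *\<^sub>R y) (u *\<^sub>R p + v *\<^sub>R q)"
      using p q uv by (auto simp: feas_def algebra_simps)
    moreover have "(\<Sum>i\<in>UNIV. (u *\<^sub>R p + v *\<^sub>R q) $ i) = 1"
      using p q uv by (simp add: sum.distrib sum_distrib_left[symmetric])
    ultimately show "u *\<^sub>R x + v *\<^sub>R y \<in> {y. \<exists>p. feas V y p \<and> (\<Sum>i\<in>UNIV. p $ i) = 1}"
      by blast
  qed
qed

lemma interior_facts:
  assumes "0 \<in> interior (convex hull (range (\<lambda>j. column j V)))"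
  shows "(\<forall>x. \<exists>p. feas V x p) \<and> (\<exists>L>0. \<forall>y. poly_gauge V y \<le> L * norm y)"
proof -
  obtain r where r: "r > 0" "ball 0 r \<subseteq> convex hull (range (\<lambda>j. column j V))"
    using assms mem_interior by blast
  have key: "\<exists>p. feas V (c *\<^sub>R y) p \<and> (\<Sum>i\<in>UNIV. p $ i) = 1" if "y \<noteq> 0" "c = r / (2 * norm y)" for y c
  proof -
    have "norm (c *\<^sub>R y) = r / 2" using that r by simp
    then have "c *\<^sub>R y \<in> ball 0 r" using r by simp
    then show ?thesis using r(2) hull_K by blast
  qed
  have surj: "\<exists>p. feas V x p" for x
  proof (cases "x = 0")
    case True then show ?thesis by (intro exI[of _ 0]) (simp add: feas_def)
  next
    case False
    define c where "c = r / (2 * norm x)"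
    have c: "c > 0" using False r by (simp add: c_def)
    obtain p where p: "feas V (c *\<^sub>R x) p" using key[OF False c_def] by blast
    have "feas V x ((1/c) *\<^sub>R p)" using p c by (auto simp: feas_def algebra_simps)
    then show ?thesis by blast
  qed
  have "poly_gauge V y \<le> (2 / r) * norm y" for y
  proof (cases "y = 0")
    case True then show ?thesis using pg_zero[OF surj] by simp
  next
    case False
    define c where "c = r / (2 * norm y)"
    have c: "c > 0" using False r by (simp add: c_def)
    obtain p where p: "feas V (c *\<^sub>R y) p" "(\<Sum>i\<in>UNIV. p $ i) = 1" using key[OF False c_def] by blast
    have "poly_gauge V ((1/c) *\<^sub>R (c *\<^sub>R y)) \<le> (1/c) * poly_gauge V (c *\<^sub>R y)"
      using c by (intro pg_hom surj) simp
    also have "\<dots> \<le> (1/c) * 1" using pg_le[OF p(1)] p(2) c by (intro mult_left_mono) auto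
    finally show ?thesis using c r False by (simp add: c_def field_simps)
  qed
  then show ?thesis using surj r by (intro conjI allI exI[of _ "2/r"]) auto
qed

lemma pg_lipschitz:
  assumes surj: "\<And>x. \<exists>p. feas V x p" and L: "\<And>y. poly_gauge V y \<le> L * norm y"
  shows "\<bar>poly_gauge V x - poly_gauge V y\<bar> \<le> L * norm (x - y)"
proof -
  have "poly_gauge V x \<le> poly_gauge V y + poly_gauge V (x - y)"
    using pg_sub[OF surj, of y "x - y"] by simp
  moreover have "poly_gauge V y \<le> poly_gauge V x + poly_gauge V (y - x)"
    using pg_sub[OF surj, of x "y - x"] by simp
  moreover have "norm (y - x) = norm (x - y)" by (simp add: norm_minus_commute)
  ultimately show ?thesis using L[of "x - y"] L[of "y - x"] by auto
qed

lemma pg_cont: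
  fixes V :: "real^'m^'n"
  assumes surj: "\<And>x. \<exists>p. feas V x p" and L: "\<And>y. poly_gauge V y \<le> L * norm y"
  shows "continuous_on UNIV (poly_gauge V)"
proof -
  show ?thesis unfolding continuous_on_iff
  proof (intro ballI allI impI)
    fix x :: "real^'n" and e :: real assume e: "e > 0"
    show "\<exists>d>0. \<forall>x'\<in>UNIV. dist x' x < d \<longrightarrow> dist (poly_gauge V x') (poly_gauge V x) < e"
    proof (intro exI[of _ "e / (\<bar>L\<bar> + 1)"] conjI ballI impI)
      show "e / (\<bar>L\<bar> + 1) > 0" using e by simp
      fix x' :: "real^'n" assume d: "dist x' x < e / (\<bar>L\<bar> + 1)"
      have "dist (poly_gauge V x') (poly_gauge V x) \<le> L * norm (x' - x)"
        using pg_lipschitz[OF surj L] by (simp add: dist_real_def)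
      also have "\<dots> \<le> \<bar>L\<bar> * norm (x' - x)" by (simp add: mult_right_mono)
      also have "\<dots> \<le> \<bar>L\<bar> * (e / (\<bar>L\<bar> + 1))" using d by (intro mult_left_mono) (auto simp: dist_norm)
      also have "\<dots> < e" using e by (simp add: field_simps)
      finally show "dist (poly_gauge V x') (poly_gauge V x) < e" .
    qed
  qed
qed



lemma sum_UNIV_plus: "(\<Sum>j\<in>(UNIV :: ('a::finite + 'b::finite) set). g j) = (\<Sum>a\<in>UNIV. g (Inl a)) + (\<Sum>b\<in>UNIV. g (Inr b))"
  using sum.Plus[of "UNIV :: 'a set" "UNIV :: 'b set" g] by (simp add: o_def)

lemma pg_B:
  fixes V :: "real^'m^'n" and B :: "real^'w^'n" and P :: "real ^ ('w + 'w) ^ 'm"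
  assumes P_nonneg: "\<And>i j. 0 \<le> P $ i $ j"
    and BP: "blockBmB B = V ** P"
    and P_colsum: "\<And>j. eta_w = (\<Sum>i\<in>UNIV. P $ i $ j)"
  shows "poly_gauge V (B *v y) \<le> eta_w * l1norm y"
proof -
  define d :: "real ^ ('w + 'w)" where
    "d = (\<chi> j. case j of Inl a \<Rightarrow> max (y$a) 0 | Inr a \<Rightarrow> max (-(y$a)) 0)"
  have d0: "0 \<le> d $ j" for j by (cases j) (auto simp: d_def)
  have "blockBmB B *v d = B *v y"
  proof (subst vec_eq_iff, intro allI)
    fix i
    have "(blockBmB B *v d) $ i = (\<Sum>a\<in>UNIV. B $ i $ a * max (y$a) 0) + (\<Sum>a\<in>UNIV. - B $ i $ a * max (-(y$a)) 0)"
      by (simp add: matrix_vector_mult_def sum_UNIV_plus blockBmB_def d_def)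
    also have "\<dots> = (\<Sum>a\<in>UNIV. B $ i $ a * y $ a)"
      by (simp add: sum.distrib[symmetric]) (rule sum.cong, auto simp: max_def algebra_simps)
    finally show "(blockBmB B *v d) $ i = (B *v y) $ i" by (simp add: matrix_vector_mult_def)
  qed
  then have eq: "V *v (P *v d) = B *v y" using BP by (simp add: matrix_vector_mul_assoc)
  have feas: "feas V (B *v y) (P *v d)"
    unfolding feas_def using eq P_nonneg d0
    by (auto simp: matrix_vector_mult_def intro!: sum_nonneg)
  have "(\<Sum>i\<in>UNIV. (P *v d) $ i) = (\<Sum>j\<in>UNIV. (\<Sum>i\<in>UNIV. P $ i $ j) * d $ j)"
    by (simp add: matrix_vector_mult_def sum_distrib_right) (rule sum.swap)
  also have "\<dots> = eta_w * (\<Sum>j\<in>UNIV. d $ j)"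
    by (simp add: P_colsum[symmetric] sum_distrib_left)
  also have "(\<Sum>j\<in>UNIV. d $ j) = l1norm y"
    by (simp add: sum_UNIV_plus d_def l1norm_def sum.distrib[symmetric]) (rule sum.cong, auto simp: max_def)
  finally show ?thesis using pg_le[OF feas] by simp
qed

lemma l1norm_Cx:
  fixes C :: "real^'n^'z" and V :: "real^'m^'n"
  assumes p: "\<And>i. 0 \<le> p $ i"
  shows "l1norm (C *v (V *v p)) \<le> (\<Sum>j\<in>UNIV. l1norm (C *v column j V) * p $ j)"
proof -
  have eq: "(C *v (V *v p)) $ k = (\<Sum>j\<in>UNIV. p $ j * (C *v column j V) $ k)" for k
    by (simp add: matrix_vector_mult_def column_def sum_distrib_left sum_distrib_right algebra_simps)
       (rule sum.swap)
  have "l1norm (C *v (V *v p)) = (\<Sum>k\<in>UNIV. \<bar>\<Sum>j\<in>UNIV. p $ j * (C *v column j V) $ k\<bar>)"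
    by (simp add: l1norm_def eq)
  also have "\<dots> \<le> (\<Sum>k\<in>UNIV. \<Sum>j\<in>UNIV. p $ j * \<bar>(C *v column j V) $ k\<bar>)"
    by (intro sum_mono order.trans[OF sum_abs]) (simp add: abs_mult p)
  also have "\<dots> = (\<Sum>j\<in>UNIV. l1norm (C *v column j V) * p $ j)"
    by (subst sum.swap) (simp add: l1norm_def sum_distrib_left sum_distrib_right mult.commute)
  finally show ?thesis .
qed

lemma pg_A:
  fixes V :: "real^'m^'n" and A :: "real^'n^'n" and M :: "real^'m^'m" and C :: "real^'n^'z"
  assumes surj: "\<And>x. \<exists>p. feas V x p"
    and Metz: "\<And>i j. i \<noteq> j \<Longrightarrow> 0 \<le> M $ i $ j"
    and AV: "A ** V = V ** M"
    and colsum: "\<And>j. - eta * l1norm (C *v column j V) = (\<Sum>i\<in>UNIV. M $ i $ j)"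
    and eta: "eta \<ge> 0"
    and h: "0 \<le> h" and hM: "\<And>i. h * \<bar>M $ i $ i\<bar> \<le> 1"
  shows "poly_gauge V (x + h *\<^sub>R (A *v x)) \<le> poly_gauge V x - h * eta * l1norm (C *v x)"
proof -
  have "poly_gauge V (x + h *\<^sub>R (A *v x)) + h * eta * l1norm (C *v x) \<le> poly_gauge V x"
  proof (rule pg_ge)
    show "\<exists>p. feas V x p" by (rule surj)
    fix p assume p: "feas V x p"
    then have p0: "\<And>i. 0 \<le> p $ i" and px: "V *v p = x" by (auto simp: feas_def)
    define q where "q = p + h *\<^sub>R (M *v p)"
    have q0: "0 \<le> q $ i" for i
    proof -
      have "(M *v p) $ i = M $ i $ i * p $ i + (\<Sum>j\<in>UNIV - {i}. M $ i $ j * p $ j)"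
        by (simp add: matrix_vector_mult_def sum.remove[of UNIV i])
      moreover have "0 \<le> (\<Sum>j\<in>UNIV - {i}. M $ i $ j * p $ j)"
        using Metz p0 by (intro sum_nonneg) auto
      moreover have "0 \<le> p $ i + h * (M $ i $ i * p $ i)"
      proof -
        have "- (h * M $ i $ i) \<le> 1" using hM[of i] mult_left_mono[OF abs_ge_minus_self[of "M$i$i"] h] by linarith
        then have "0 \<le> (1 + h * M $ i $ i) * p $ i" using p0[of i] by (intro mult_nonneg_nonneg) auto
        then show ?thesis by (simp add: algebra_simps)
      qed
      ultimately show ?thesis using h by (simp add: q_def algebra_simps)
          (metis add_nonneg_nonneg mult_nonneg_nonneg add.assoc)
    qed
    have "V *v q = x + h *\<^sub>R (A *v x)"
      by (simp add: q_def algebra_simps matrix_vector_mul_assoc AV[symmetric] px[symmetric])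
    then have fq: "feas V (x + h *\<^sub>R (A *v x)) q" using q0 by (simp add: feas_def)
    have "(\<Sum>i\<in>UNIV. (M *v p) $ i) = (\<Sum>j\<in>UNIV. (\<Sum>i\<in>UNIV. M $ i $ j) * p $ j)"
      by (simp add: matrix_vector_mult_def sum_distrib_right) (rule sum.swap)
    also have "\<dots> = - eta * (\<Sum>j\<in>UNIV. l1norm (C *v column j V) * p $ j)"
      by (simp add: colsum[symmetric] sum_distrib_left algebra_simps)
    finally have sM: "(\<Sum>i\<in>UNIV. (M *v p) $ i) = - eta * (\<Sum>j\<in>UNIV. l1norm (C *v column j V) * p $ j)" .
    have sq: "(\<Sum>i\<in>UNIV. q $ i) = (\<Sum>i\<in>UNIV. p $ i) - h * eta * (\<Sum>j\<in>UNIV. l1norm (C *v column j V) * p $ j)"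
      by (simp add: q_def sum.distrib sum_distrib_left[symmetric] sM)
    have "h * eta * l1norm (C *v x) \<le> h * eta * (\<Sum>j\<in>UNIV. l1norm (C *v column j V) * p $ j)"
      using l1norm_Cx[of p C V] p0 px h eta by (intro mult_left_mono) auto
    then show "poly_gauge V (x + h *\<^sub>R (A *v x)) + h * eta * l1norm (C *v x) \<le> (\<Sum>i\<in>UNIV. p $ i)"
      using pg_le[OF fq] sq by linarith
  qed
  then show ?thesis by simp
qed



lemma int_in_convex:
  fixes g :: "real \<Rightarrow> 'a::euclidean_space"
  assumes S: "convex S" "closed S" and ab: "a < b" and I: "(g has_integral I) {a..b}"
    and gS: "\<And>s. s \<in> {a..b} \<Longrightarrow> g s \<in> S"
  shows "(1 / (b - a)) *\<^sub>R I \<in> S"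
proof (rule ccontr)
  assume "(1 / (b - a)) *\<^sub>R I \<notin> S"
  then obtain c d where cd: "inner c ((1 / (b - a)) *\<^sub>R I) < d" "\<And>x. x \<in> S \<Longrightarrow> inner c x > d"
    using separating_hyperplane_closed_point[OF S] by blast
  have i1: "((\<lambda>s. inner c (g s)) has_integral inner c I) {a..b}"
    using has_integral_linear[OF I bounded_linear_inner_right[of c]] by (simp add: o_def)
  have i2: "((\<lambda>s. d) has_integral (b - a) * d) {a..b}"
    using has_integral_const_real[of d a b] ab by simp
  have "(b - a) * d \<le> inner c I"
    by (rule has_integral_le[OF i2 i1]) (use cd(2) gS in \<open>auto intro: less_imp_le\<close>)
  then have "d \<le> inner c ((1 / (b - a)) *\<^sub>R I)" using ab by (simp add: field_simps)
  then show False using cd(1) by simp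
qed

lemma linear_mv: "linear (\<lambda>J :: real^'n^'m. J *v d)"
  by (rule linearI) (simp_all add: vec_eq_iff matrix_vector_mult_def sum.distrib sum_distrib_left algebra_simps)

lemma mean_value_hull:
  fixes f :: "real ^ 'n \<Rightarrow> real ^ 'n" and A :: "'k::finite \<Rightarrow> real ^ 'n ^ 'n"
  assumes f_deriv: "\<And>x. (f has_derivative (\<lambda>h. Jf x *v h)) (at x)"
    and Jf_conv: "\<And>x. Jf x \<in> convex hull (range A)"
  shows "f x1 - f x2 \<in> convex hull (range (\<lambda>l. A l *v (x1 - x2)))"
proof -
  define d where "d = x1 - x2"
  define S where "S = convex hull (range (\<lambda>l. A l *v d))"
  have cS: "convex S" by (simp add: S_def convex_convex_hull)
  have clS: "closed S" unfolding S_def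
    by (intro compact_imp_closed compact_convex_hull finite_imp_compact) simp
  have der: "((\<lambda>s. f (x2 + s *\<^sub>R d)) has_vector_derivative (Jf (x2 + s *\<^sub>R d) *v d)) (at s within {0..1})"
    for s :: real
  proof -
    have "((\<lambda>s. x2 + s *\<^sub>R d) has_derivative (\<lambda>t. t *\<^sub>R d)) (at s within {0..1})"
      by (auto intro!: derivative_eq_intros)
    from has_derivative_compose[OF this f_deriv]
    show ?thesis unfolding has_vector_derivative_def by (simp add: matrix_vector_mult_scaleR)
  qed
  have I: "((\<lambda>s. Jf (x2 + s *\<^sub>R d) *v d) has_integral (f x1 - f x2)) {0..1}"
    using fundamental_theorem_of_calculus[of 0 1, OF _ der] by (simp add: d_def)
  have "Jf y *v d \<in> S" for y
  proof -
    have "(\<lambda>J. J *v d) ` (convex hull (range A)) = S"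
      unfolding S_def by (subst convex_hull_linear_image[OF linear_mv]) (simp add: image_image)
    then show ?thesis using Jf_conv[of y] by blast
  qed
  then have "(1 / (1 - 0)) *\<^sub>R (f x1 - f x2) \<in> S"
    by (intro int_in_convex[OF cS clS _ I]) auto
  then show ?thesis by (simp add: S_def d_def)
qed

lemma pg_conv:
  fixes V :: "real^'m^'n" and A :: "'k::finite \<Rightarrow> real^'n^'n"
  assumes surj: "\<And>x. \<exists>p. feas V x p"
    and base: "\<And>l h. 0 \<le> h \<Longrightarrow> h \<le> h0 \<Longrightarrow> poly_gauge V (x + h *\<^sub>R (A l *v x)) \<le> poly_gauge V x - h * c"
    and u: "u \<in> convex hull (range (\<lambda>l. A l *v x))"
    and h: "0 \<le> h" "h \<le> h0"
  shows "poly_gauge V (x + h *\<^sub>R u) \<le> poly_gauge V x - h * c"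
proof -
  let ?T = "{u. \<forall>h. 0 \<le> h \<and> h \<le> h0 \<longrightarrow> poly_gauge V (x + h *\<^sub>R u) \<le> poly_gauge V x - h * c}"
  have "convex hull (range (\<lambda>l. A l *v x)) \<subseteq> ?T"
  proof (rule hull_minimal)
    show "range (\<lambda>l. A l *v x) \<subseteq> ?T" using base by auto
    show "convex ?T" unfolding convex_def
    proof (intro ballI allI impI)
      fix u1 u2 and a b :: real
      assume u1: "u1 \<in> ?T" and u2: "u2 \<in> ?T" and ab: "0 \<le> a" "0 \<le> b" "a + b = 1"
      show "a *\<^sub>R u1 + b *\<^sub>R u2 \<in> ?T"
      proof (clarify)
        fix h :: real assume h: "0 \<le> h" "h \<le> h0"
        have "x + h *\<^sub>R (a *\<^sub>R u1 + b *\<^sub>R u2) = a *\<^sub>R (x + h *\<^sub>R u1) + b *\<^sub>R (x + h *\<^sub>R u2)"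
          using ab by (simp add: algebra_simps flip: scaleR_add_left)
        then have "poly_gauge V (x + h *\<^sub>R (a *\<^sub>R u1 + b *\<^sub>R u2))
            \<le> a * poly_gauge V (x + h *\<^sub>R u1) + b * poly_gauge V (x + h *\<^sub>R u2)"
          using pg_comb[OF surj ab(1,2)] by simp
        also have "\<dots> \<le> a * (poly_gauge V x - h * c) + b * (poly_gauge V x - h * c)"
          using u1 u2 h ab by (intro add_mono mult_left_mono) auto
        also have "\<dots> = poly_gauge V x - h * c" using ab by (simp add: algebra_simps flip: distrib_right)
        finally show "poly_gauge V (x + h *\<^sub>R (a *\<^sub>R u1 + b *\<^sub>R u2)) \<le> poly_gauge V x - h * c" .
      qed
    qed
  qed
  then show ?thesis using u h by blast
qed



lemma dplus_le:
  fixes phi :: "real^'n \<Rightarrow> real"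
  assumes conv: "\<And>a b x y. 0 \<le> a \<Longrightarrow> 0 \<le> b \<Longrightarrow> a + b = 1 \<Longrightarrow> phi (a *\<^sub>R x + b *\<^sub>R y) \<le> a * phi x + b * phi y"
    and h: "h > 0" and qc: "(phi (x + h *\<^sub>R v) - phi x) / h \<le> c"
  shows "Dplus phi x v \<le> c"
proof -
  define q where "q = (\<lambda>h. (phi (x + h *\<^sub>R v) - phi x) / h)"
  have mono: "q h1 \<le> q h2" if "0 < h1" "h1 \<le> h2" for h1 h2
  proof -
    define a where "a = h1 / h2"
    have a: "0 \<le> a" "0 \<le> 1 - a" "a + (1 - a) = 1" using that by (auto simp: a_def)
    have "a *\<^sub>R (x + h2 *\<^sub>R v) + (1 - a) *\<^sub>R x = x + (a * h2) *\<^sub>R v"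
      by (simp add: algebra_simps)
    moreover have "a * h2 = h1" using that by (simp add: a_def)
    ultimately have "x + h1 *\<^sub>R v = a *\<^sub>R (x + h2 *\<^sub>R v) + (1 - a) *\<^sub>R x" by simp
    then have "phi (x + h1 *\<^sub>R v) \<le> a * phi (x + h2 *\<^sub>R v) + (1 - a) * phi x"
      using conv[OF a, of "x + h2 *\<^sub>R v" x] by metis
    then have "phi (x + h1 *\<^sub>R v) - phi x \<le> a * (phi (x + h2 *\<^sub>R v) - phi x)" by (simp add: algebra_simps)
    then have "(phi (x + h1 *\<^sub>R v) - phi x) / h1 \<le> (a * (phi (x + h2 *\<^sub>R v) - phi x)) / h1"
      using that by (intro divide_right_mono) auto
    also have "\<dots> = (phi (x + h2 *\<^sub>R v) - phi x) / h2"
      using that by (simp add: a_def)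
    finally have "(phi (x + h1 *\<^sub>R v) - phi x) / h1 \<le> (phi (x + h2 *\<^sub>R v) - phi x) / h2" .
    then show ?thesis by (simp add: q_def)
  qed
  have low: "phi x - phi (x - v) \<le> q h" if "0 < h" for h
  proof -
    define a where "a = 1 / (1 + h)"
    have a: "0 \<le> a" "0 \<le> h * a" "a + h * a = 1" using that by (auto simp: a_def field_simps)
    have "a *\<^sub>R (x + h *\<^sub>R v) + (h * a) *\<^sub>R (x - v) = (a + h * a) *\<^sub>R x"
      by (simp add: algebra_simps)
    then have "x = a *\<^sub>R (x + h *\<^sub>R v) + (h * a) *\<^sub>R (x - v)"
      using a(3) by simp
    then have "phi x \<le> a * phi (x + h *\<^sub>R v) + (h * a) * phi (x - v)"
      using conv[OF a] by metis
    then have "(1 + h) * phi x \<le> (1 + h) * (a * phi (x + h *\<^sub>R v) + (h * a) * phi (x - v))"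
      using that by (intro mult_left_mono) auto
    also have "\<dots> = ((1 + h) * a) * (phi (x + h *\<^sub>R v) + h * phi (x - v))"
      by (simp only: distrib_left mult.assoc mult.left_commute)
    also have "\<dots> = phi (x + h *\<^sub>R v) + h * phi (x - v)"
    proof -
      have "(1 + h) * a = 1" using that by (simp add: a_def)
      then show ?thesis by simp
    qed
    finally have "(1 + h) * phi x \<le> phi (x + h *\<^sub>R v) + h * phi (x - v)" .
    then have "(phi x - phi (x - v)) * h \<le> phi (x + h *\<^sub>R v) - phi x"
      by (simp add: algebra_simps)
    then show ?thesis using that unfolding q_def by (simp add: pos_le_divide_eq)
  qed
  define L where "L = Inf (q ` {0<..})"
  have bdd: "bdd_below (q ` {0<..})" using low by (intro bdd_belowI[of _ "phi x - phi (x - v)"]) auto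
  have Lq: "L \<le> q h" if "0 < h" for h unfolding L_def using bdd that by (intro cInf_lower) auto
  have "(q \<longlongrightarrow> L) (at_right 0)"
  proof (rule order_tendstoI)
    fix y assume "y < L"
    then show "eventually (\<lambda>h. y < q h) (at_right 0)"
      unfolding eventually_at_right_field using Lq by (intro exI[of _ 1]) force
  next
    fix y assume "L < y"
    have ne: "q ` {0<..} \<noteq> {}" by auto
    from cInf_lessD[OF ne, of y] \<open>L < y\<close> obtain z where "z \<in> q ` {0<..}" "z < y"
      unfolding L_def by blast
    then obtain h1 where h1: "h1 > 0" "q h1 < y" by auto
    show "eventually (\<lambda>h. q h < y) (at_right 0)"
    proof (unfold eventually_at_right_field, intro exI[of _ h1] conjI allI impI)
      show "h1 > 0" by (rule h1)
      fix t :: real assume t: "0 < t" "t < h1"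
      then have "q t \<le> q h1" by (intro mono) auto
      then show "q t < y" using h1 by auto
    qed
  qed
  then have "Dplus phi x v = L" unfolding Dplus_def q_def by (intro tendsto_Lim) auto
  moreover have "q h \<le> c" unfolding q_def by (rule qc)
  ultimately show ?thesis using Lq[OF h] by linarith
qed



locale sys =
  fixes f :: "real ^ 'n \<Rightarrow> real ^ 'n"
    and Jf :: "real ^ 'n \<Rightarrow> real ^ 'n ^ 'n"
    and B :: "real ^ 'w ^ 'n"
    and C :: "real ^ 'n ^ 'z"
    and A :: "'k::finite \<Rightarrow> real ^ 'n ^ 'n"
    and V :: "real ^ 'm ^ 'n"
    and P :: "real ^ ('w + 'w) ^ 'm"
    and M :: "'k \<Rightarrow> real ^ 'm ^ 'm"
    and eta_w eta_z :: real
  assumes f_deriv: "\<And>x. (f has_derivative (\<lambda>h. Jf x *v h)) (at x)"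
    and Jf_conv: "\<And>x. Jf x \<in> convex hull (range A)"
    and P_nonneg: "\<And>i j. 0 \<le> P $ i $ j"
    and BP: "blockBmB B = V ** P"
    and P_colsum: "\<And>j. eta_w = (\<Sum>i\<in>UNIV. P $ i $ j)"
    and eta_z_pos: "eta_z > 0"
    and M_metzler: "\<And>l i j. i \<noteq> j \<Longrightarrow> 0 \<le> M l $ i $ j"
    and AV: "\<And>l. A l ** V = V ** M l"
    and M_colsum: "\<And>l j. - eta_z * l1norm (C *v column j V) = (\<Sum>i\<in>UNIV. M l $ i $ j)"
    and V_interior: "0 \<in> interior (convex hull (range (\<lambda>j. column j V)))"
begin

lemma surj: "\<exists>p. feas V x p"
  using interior_facts[OF V_interior] by blast

lemma lip: "\<exists>L>0. \<forall>y. poly_gauge V y \<le> L * norm y"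
  using interior_facts[OF V_interior] by blast

definition h0 :: real where "h0 = 1 / (1 + (\<Sum>l\<in>UNIV. \<Sum>i\<in>UNIV. \<bar>M l $ i $ i\<bar>))"

lemma h0_pos: "h0 > 0"
proof -
  have "0 \<le> (\<Sum>l\<in>UNIV. \<Sum>i\<in>UNIV. \<bar>M l $ i $ i\<bar>)" by (intro sum_nonneg) auto
  then show ?thesis by (simp add: h0_def)
qed

lemma h0_M: assumes "0 \<le> h" "h \<le> h0" shows "h * \<bar>M l $ i $ i\<bar> \<le> 1"
proof -
  define S where "S = (\<Sum>l\<in>UNIV. \<Sum>i\<in>UNIV. \<bar>M l $ i $ i\<bar>)"
  have S0: "0 \<le> S" unfolding S_def by (intro sum_nonneg) auto
  have "\<bar>M l $ i $ i\<bar> \<le> (\<Sum>i\<in>UNIV. \<bar>M l $ i $ i\<bar>)"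
    by (rule member_le_sum) auto
  also have "\<dots> \<le> S" unfolding S_def
    by (rule member_le_sum[where f="\<lambda>l. \<Sum>i\<in>UNIV. \<bar>M l $ i $ i\<bar>"]) (auto intro: sum_nonneg)
  finally have "\<bar>M l $ i $ i\<bar> \<le> S" .
  then have "h * \<bar>M l $ i $ i\<bar> \<le> h0 * (1 + S)"
    using assms by (intro mult_mono) auto
  also have "h0 * (1 + S) = 1" using S0 by (simp add: h0_def S_def)
  finally show ?thesis .
qed

lemma key:
  assumes u: "u \<in> convex hull (range (\<lambda>l. A l *v x))" and h: "0 \<le> h" "h \<le> h0"
  shows "poly_gauge V (x + h *\<^sub>R u) \<le> poly_gauge V x - h * (eta_z * l1norm (C *v x))"
proof (rule pg_conv[OF surj _ u h])
  fix l and h :: real assume h: "0 \<le> h" "h \<le> h0"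
  show "poly_gauge V (x + h *\<^sub>R (A l *v x)) \<le> poly_gauge V x - h * (eta_z * l1norm (C *v x))"
    using pg_A[OF surj M_metzler AV M_colsum _ h(1) h0_M[OF h]] eta_z_pos by (simp add: mult.assoc)
qed

lemma pgB: "poly_gauge V (B *v y) \<le> eta_w * l1norm y"
  by (rule pg_B[OF P_nonneg BP P_colsum])

lemma part1:
  "Dplus (\<lambda>x. poly_gauge V x / eta_z) (x1 - x2) (f x1 - f x2 + B *v (w1 - w2))
     \<le> - l1norm (C *v (x1 - x2)) + (eta_w / eta_z) * l1norm (w1 - w2)"
proof (rule dplus_le)
  fix a b :: real and x y assume ab: "0 \<le> a" "0 \<le> b" "a + b = 1"
  show "poly_gauge V (a *\<^sub>R x + b *\<^sub>R y) / eta_z \<le> a * (poly_gauge V x / eta_z) + b * (poly_gauge V y / eta_z)"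
    using pg_comb[OF surj ab(1,2), of x y] eta_z_pos by (simp add: divide_right_mono add_divide_distrib[symmetric])
next
  show "h0 > 0" by (rule h0_pos)
  define x where "x = x1 - x2"
  define u where "u = f x1 - f x2"
  have u: "u \<in> convex hull (range (\<lambda>l. A l *v x))"
    unfolding u_def x_def by (rule mean_value_hull[OF f_deriv Jf_conv])
  have "poly_gauge V (x + h0 *\<^sub>R (u + B *v (w1 - w2))) \<le> poly_gauge V (x + h0 *\<^sub>R u) + poly_gauge V (h0 *\<^sub>R (B *v (w1 - w2)))"
    using pg_sub[OF surj, of "x + h0 *\<^sub>R u" "h0 *\<^sub>R (B *v (w1 - w2))"] by (simp add: algebra_simps)
  also have "\<dots> \<le> (poly_gauge V x - h0 * (eta_z * l1norm (C *v x))) + h0 * (eta_w * l1norm (w1 - w2))"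
    using key[OF u _ order.refl] h0_pos pg_hom[OF surj, of h0 "B *v (w1 - w2)"] pgB[of "w1 - w2"]
    by (intro add_mono) (auto intro: order.trans mult_left_mono)
  finally have *: "poly_gauge V (x + h0 *\<^sub>R (u + B *v (w1 - w2))) - poly_gauge V x
      \<le> h0 * (eta_z * (- l1norm (C *v x) + (eta_w / eta_z) * l1norm (w1 - w2)))"
    using eta_z_pos by (simp add: algebra_simps)
  have "(poly_gauge V (x + h0 *\<^sub>R (u + B *v (w1 - w2))) / eta_z - poly_gauge V x / eta_z) / h0
     = ((poly_gauge V (x + h0 *\<^sub>R (u + B *v (w1 - w2))) - poly_gauge V x) / (h0 * eta_z))"
    by (simp add: diff_divide_distrib mult.commute)
  also have "\<dots> \<le> (h0 * (eta_z * (- l1norm (C *v x) + (eta_w / eta_z) * l1norm (w1 - w2)))) / (h0 * eta_z)"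
    using * h0_pos eta_z_pos by (intro divide_right_mono) auto
  also have "\<dots> = - l1norm (C *v x) + (eta_w / eta_z) * l1norm (w1 - w2)"
    using h0_pos eta_z_pos by simp
  finally show "(poly_gauge V (x1 - x2 + h0 *\<^sub>R (f x1 - f x2 + B *v (w1 - w2))) / eta_z - poly_gauge V (x1 - x2) / eta_z) / h0
    \<le> - l1norm (C *v (x1 - x2)) + eta_w / eta_z * l1norm (w1 - w2)"
    by (simp add: x_def u_def)
qed

end



lemma cont_l1: "continuous_on UNIV (l1norm :: real^'n \<Rightarrow> real)"
  unfolding l1norm_def[abs_def] by (intro continuous_intros)

lemma l1_nonneg: "0 \<le> l1norm v" unfolding l1norm_def by (intro sum_nonneg) auto

lemma dini_mono:
  fixes F :: "real \<Rightarrow> real"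
  assumes ab: "a \<le> b" and cont: "continuous_on {a..b} F"
    and loc: "\<And>t e. a \<le> t \<Longrightarrow> t < b \<Longrightarrow> e > 0 \<Longrightarrow> \<exists>d>0. \<forall>h. 0 < h \<and> h < d \<and> t + h \<le> b \<longrightarrow> F (t + h) - F t \<le> e * h"
  shows "F b \<le> F a"
proof (rule field_le_epsilon)
  fix e :: real assume e: "e > 0"
  define ee where "ee = e / (b - a + 1)"
  have ee: "ee > 0" using e ab by (simp add: ee_def)
  define S where "S = {a..b} \<inter> (\<lambda>s. F s - ee * (s - a)) -` {..F a}"
  have clS: "closed S" unfolding S_def
    by (intro continuous_closed_preimage continuous_intros cont)
  have aS: "a \<in> S" using ab by (simp add: S_def)
  have bdd: "bdd_above S" unfolding S_def by (intro bdd_aboveI[of _ b]) auto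
  define s where "s = Sup S"
  have sS: "s \<in> S" unfolding s_def using closed_contains_Sup[OF _ bdd clS] aS by blast
  then have sab: "a \<le> s" "s \<le> b" and Fs: "F s \<le> F a + ee * (s - a)" by (auto simp: S_def)
  have "s = b"
  proof (rule ccontr)
    assume "s \<noteq> b"
    with sab have sb: "s < b" by simp
    obtain d where d: "d > 0" "\<And>h. 0 < h \<and> h < d \<and> s + h \<le> b \<Longrightarrow> F (s + h) - F s \<le> ee * h"
      using loc[OF sab(1) sb ee] by blast
    define h where "h = min (d / 2) (b - s)"
    have h: "0 < h" "h < d" "s + h \<le> b" using d sb by (auto simp: h_def)
    have "F (s + h) \<le> F a + ee * (s + h - a)" using d(2)[OF conjI[OF h(1) conjI[OF h(2) h(3)]]] Fs
      by (simp add: algebra_simps)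
    then have "s + h \<in> S" using h sab by (simp add: S_def)
    then have "s + h \<le> s" unfolding s_def using bdd by (rule cSup_upper)
    then show False using h by simp
  qed
  then have "F b \<le> F a + ee * (b - a)" using Fs by simp
  also have "ee * (b - a) \<le> e" using e ab by (simp add: ee_def field_simps)
  finally show "F b \<le> F a + e" by simp
qed



context sys begin

lemma pg_cont': "continuous_on UNIV (poly_gauge V)"
proof -
  obtain L where "L > 0" "\<And>y. poly_gauge V y \<le> L * norm y" using lip by blast
  then show ?thesis using pg_cont[OF surj] by blast
qed

lemma pg_integral_B:
  fixes a b :: real and dw :: "real \<Rightarrow> real^'w"
  assumes G: "((\<lambda>s. B *v dw s) has_integral G) {a..b}"
    and W: "((\<lambda>s. l1norm (dw s)) has_integral I) {a..b}" and ab: "a < b"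
  shows "poly_gauge V G \<le> eta_w * I"
proof -
  define Q where "Q = {z :: (real^'n) \<times> real. poly_gauge V (fst z) \<le> snd z}"
  have cQ: "convex Q" unfolding convex_def Q_def
  proof (intro ballI allI impI, clarsimp)
    fix y1 r1 y2 r2 and u v :: real
    assume "poly_gauge V y1 \<le> r1" "poly_gauge V y2 \<le> r2" "0 \<le> u" "0 \<le> v" "u + v = 1"
    then show "poly_gauge V (u *\<^sub>R y1 + v *\<^sub>R y2) \<le> u * r1 + v * r2"
      using pg_comb[OF surj, of u v y1 y2]
      by (smt (verit) mult_left_mono)
  qed
  have clQ: "closed Q"
  proof -
    have "continuous_on UNIV (\<lambda>z :: (real^'n) \<times> real. poly_gauge V (fst z) - snd z)"
      by (intro continuous_intros continuous_on_compose2[OF pg_cont']) auto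
    then have "closed (UNIV \<inter> (\<lambda>z :: (real^'n) \<times> real. poly_gauge V (fst z) - snd z) -` {..0})"
      by (intro continuous_closed_preimage) auto
    moreover have "UNIV \<inter> (\<lambda>z :: (real^'n) \<times> real. poly_gauge V (fst z) - snd z) -` {..0} = Q"
      by (auto simp: Q_def)
    ultimately show ?thesis by simp
  qed
  have i1: "((\<lambda>s. (B *v dw s, 0::real)) has_integral (G, 0)) {a..b}"
    using has_integral_linear[OF G bounded_linear_Pair[OF bounded_linear_ident bounded_linear_zero]]
    by (simp add: o_def)
  have i2: "((\<lambda>s. (0 :: real^'n, eta_w * l1norm (dw s))) has_integral (0, eta_w * I)) {a..b}"
    using has_integral_linear[OF W bounded_linear_Pair[OF bounded_linear_zero bounded_linear_mult_right[of eta_w]]]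
    by (simp add: o_def)
  have i: "((\<lambda>s. (B *v dw s, eta_w * l1norm (dw s))) has_integral (G, eta_w * I)) {a..b}"
    using has_integral_add[OF i1 i2] by simp
  have "(1 / (b - a)) *\<^sub>R (G, eta_w * I) \<in> Q"
    by (rule int_in_convex[OF cQ clQ ab i]) (simp add: Q_def pgB)
  then have *: "poly_gauge V ((1 / (b - a)) *\<^sub>R G) \<le> eta_w * I / (b - a)" by (simp add: Q_def)
  have "poly_gauge V G = poly_gauge V ((b - a) *\<^sub>R ((1 / (b - a)) *\<^sub>R G))" using ab by simp
  also have "\<dots> \<le> (b - a) * poly_gauge V ((1 / (b - a)) *\<^sub>R G)" using ab by (intro pg_hom surj) simp
  also have "\<dots> \<le> (b - a) * (eta_w * I / (b - a))" using * ab by (intro mult_left_mono) auto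
  also have "\<dots> = eta_w * I" using ab by simp
  finally show ?thesis .
qed

end



context sys begin

lemma f_cont: "continuous_on UNIV f"
  using has_derivative_continuous[OF f_deriv] by (intro continuous_at_imp_continuous_on) auto

lemma eta_w_nonneg: "eta_w \<ge> 0"
  using P_colsum[of undefined] P_nonneg by (simp add: sum_nonneg)

lemma part2_T:
  fixes w1 w2 :: "real \<Rightarrow> real^'w" and x1 x2 :: "real \<Rightarrow> real^'n"
  assumes sol1: "is_solution f B w1 x1" and sol2: "is_solution f B w2 x2"
    and Wint: "(\<lambda>t. l1norm (w1 t - w2 t)) integrable_on {0..}"
    and T: "0 \<le> T"
  shows "(\<lambda>t. l1norm (C *v x1 t - C *v x2 t)) integrable_on {0..T} \<and>
         integral {0..T} (\<lambda>t. l1norm (C *v x1 t - C *v x2 t))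
           \<le> (eta_w / eta_z) * integral {0..T} (\<lambda>t. l1norm (w1 t - w2 t))"
proof -
  define u1 where "u1 = (\<lambda>s. f (x1 s) + B *v w1 s)"
  define u2 where "u2 = (\<lambda>s. f (x2 s) + B *v w2 s)"
  have hi1: "(u1 has_integral x1 t) {0..t}" if "0 \<le> t" for t
    using sol1 that unfolding is_solution_def u1_def by blast
  have hi2: "(u2 has_integral x2 t) {0..t}" if "0 \<le> t" for t
    using sol2 that unfolding is_solution_def u2_def by blast
  have x10: "x1 0 = 0" and x20: "x2 0 = 0" using sol1 sol2 by (auto simp: is_solution_def)
  have int1: "u1 integrable_on {a..b}" if "0 \<le> a" "a \<le> b" "b \<le> T" for a b
    using integrable_subinterval_real[OF has_integral_integrable[OF hi1[OF T]]] that by auto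
  have int2: "u2 integrable_on {a..b}" if "0 \<le> a" "a \<le> b" "b \<le> T" for a b
    using integrable_subinterval_real[OF has_integral_integrable[OF hi2[OF T]]] that by auto
  have cx1: "continuous_on {0..T} x1"
  proof -
    have "continuous_on {0..T} (\<lambda>t. integral {0..t} u1)"
      by (rule indefinite_integral_continuous_1[OF int1[OF order.refl T order.refl]])
    moreover have "integral {0..t} u1 = x1 t" if "t \<in> {0..T}" for t
      using hi1 that by (simp add: integral_unique)
    ultimately show ?thesis by (rule continuous_on_eq)
  qed
  have cx2: "continuous_on {0..T} x2"
  proof -
    have "continuous_on {0..T} (\<lambda>t. integral {0..t} u2)"
      by (rule indefinite_integral_continuous_1[OF int2[OF order.refl T order.refl]])
    moreover have "integral {0..t} u2 = x2 t" if "t \<in> {0..T}" for t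
      using hi2 that by (simp add: integral_unique)
    ultimately show ?thesis by (rule continuous_on_eq)
  qed
  define e where "e = (\<lambda>s. x1 s - x2 s)"
  define D where "D = (\<lambda>s. f (x1 s) - f (x2 s))"
  define Ce where "Ce = (\<lambda>t. l1norm (C *v x1 t - C *v x2 t))"
  define W where "W = (\<lambda>t. l1norm (w1 t - w2 t))"
  define g where "g = (\<lambda>s. B *v (w1 s - w2 s))"
  define \<gamma> where "\<gamma> = eta_w / eta_z"
  have ce: "continuous_on {0..T} e" unfolding e_def by (intro continuous_intros cx1 cx2)
  have cD: "continuous_on {0..T} D" unfolding D_def
    by (intro continuous_intros continuous_on_compose2[OF f_cont] cx1 cx2) auto
  have Ce_e: "Ce s = l1norm (C *v e s)" for s by (simp add: Ce_def e_def matrix_vector_mult_diff_distrib)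
  have cCe0: "continuous_on {0..T} (\<lambda>x. C *v e x)"
    using continuous_on_compose2[OF linear_continuous_on[OF matrix_vector_mul_bounded_linear[of C]] ce] by auto
  have cCe: "continuous_on {0..T} Ce" unfolding Ce_e[abs_def]
    by (intro continuous_on_compose2[OF cont_l1] cCe0) auto
  have intW: "W integrable_on {0..t}" for t
    unfolding W_def by (rule integrable_on_subinterval[OF Wint]) auto
  have intCe: "Ce integrable_on {a..b}" if "0 \<le> a" "a \<le> b" "b \<le> T" for a b
    using integrable_continuous_real[OF continuous_on_subset[OF cCe]] that by auto
  define F where "F = (\<lambda>t. poly_gauge V (e t) / eta_z + integral {0..t} Ce - \<gamma> * integral {0..t} W)"
  have cF: "continuous_on {0..T} F" unfolding F_def
    by (intro continuous_intros continuous_on_compose2[OF pg_cont'] ce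
        indefinite_integral_continuous_1 intCe intW T) (use eta_z_pos in auto)
  have F0: "F 0 = 0" by (simp add: F_def e_def x10 x20 pg_zero[OF surj])
  have "F T \<le> F 0"
  proof (rule dini_mono[OF T cF])
    fix t \<epsilon> :: real assume t: "0 \<le> t" "t < T" and \<epsilon>: "\<epsilon> > 0"
    obtain Lc where Lc: "Lc > 0" "\<And>y. poly_gauge V y \<le> Lc * norm y" using lip by blast
    define \<epsilon>1 where "\<epsilon>1 = \<epsilon> * eta_z / (2 * Lc)"
    have \<epsilon>1: "\<epsilon>1 > 0" using \<epsilon> Lc eta_z_pos by (simp add: \<epsilon>1_def)
    have tT: "t \<in> {0..T}" using t by auto
    obtain d1 where d1: "d1 > 0" "\<And>s. s \<in> {0..T} \<Longrightarrow> dist s t < d1 \<Longrightarrow> dist (D s) (D t) < \<epsilon>1"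
      using cD tT \<epsilon>1 unfolding continuous_on_iff by metis
    obtain d2 where d2: "d2 > 0" "\<And>s. s \<in> {0..T} \<Longrightarrow> dist s t < d2 \<Longrightarrow> dist (Ce s) (Ce t) < \<epsilon> / 2"
      using cCe tT \<epsilon> unfolding continuous_on_iff by (metis half_gt_zero)
    show "\<exists>d>0. \<forall>h. 0 < h \<and> h < d \<and> t + h \<le> T \<longrightarrow> F (t + h) - F t \<le> \<epsilon> * h"
    proof (intro exI[of _ "min (min d1 d2) h0"] conjI allI impI)
      show "min (min d1 d2) h0 > 0" using d1 d2 h0_pos by simp
      fix h :: real assume "0 < h \<and> h < min (min d1 d2) h0 \<and> t + h \<le> T"
      then have h: "0 < h" "h < d1" "h < d2" "h \<le> h0" "t + h \<le> T" by auto
      have sub: "s \<in> {0..T}" "dist s t < d1" "dist s t < d2" if "s \<in> {t..t+h}" for s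
        using that t h by (auto simp: dist_real_def)
      have iu1: "u1 integrable_on {t..t+h}" and iu2: "u2 integrable_on {t..t+h}"
        using int1 int2 t h by auto
      have x1c: "x1 (t + h) = x1 t + integral {t..t+h} u1"
      proof -
        have "integral {0..t} u1 + integral {t..t+h} u1 = integral {0..t+h} u1"
          using t h by (intro Henstock_Kurzweil_Integration.integral_combine int1) auto
        then show ?thesis using hi1[of t] hi1[of "t+h"] t h by (simp add: integral_unique)
      qed
      have x2c: "x2 (t + h) = x2 t + integral {t..t+h} u2"
      proof -
        have "integral {0..t} u2 + integral {t..t+h} u2 = integral {0..t+h} u2"
          using t h by (intro Henstock_Kurzweil_Integration.integral_combine int2) auto
        then show ?thesis using hi2[of t] hi2[of "t+h"] t h by (simp add: integral_unique)
      qed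
      have iD: "D integrable_on {t..t+h}"
        using integrable_continuous_real[OF continuous_on_subset[OF cD]] t h by auto
      have ug: "u1 s - u2 s = D s + g s" for s
        by (simp add: u1_def u2_def D_def g_def matrix_vector_mult_diff_distrib)
      have iuu: "(\<lambda>s. u1 s - u2 s) integrable_on {t..t+h}"
        by (rule Henstock_Kurzweil_Integration.integrable_diff[OF iu1 iu2])
      have ig: "g integrable_on {t..t+h}"
      proof -
        have "(\<lambda>s. (u1 s - u2 s) - D s) integrable_on {t..t+h}"
          by (rule Henstock_Kurzweil_Integration.integrable_diff[OF iuu iD])
        moreover have "(\<lambda>s. (u1 s - u2 s) - D s) = g" using ug by (auto simp: fun_eq_iff)
        ultimately show ?thesis by simp
      qed
      define R where "R = integral {t..t+h} (\<lambda>s. D s - D t)"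
      define G where "G = integral {t..t+h} g"
      have Rdef: "R = integral {t..t+h} D - h *\<^sub>R D t"
        unfolding R_def using h
        by (subst Henstock_Kurzweil_Integration.integral_diff[OF iD]) auto
      have "integral {t..t+h} (\<lambda>s. u1 s - u2 s) = integral {t..t+h} D + G"
        unfolding G_def ug by (rule Henstock_Kurzweil_Integration.integral_add[OF iD ig])
      then have "integral {t..t+h} u1 - integral {t..t+h} u2 = integral {t..t+h} D + G"
        by (simp add: Henstock_Kurzweil_Integration.integral_diff[OF iu1 iu2])
      moreover have "e (t + h) = e t + (integral {t..t+h} u1 - integral {t..t+h} u2)"
        unfolding e_def x1c x2c by simp
      ultimately have eth: "e (t + h) = (e t + h *\<^sub>R D t) + R + G"
        unfolding Rdef by simp
      have step1: "poly_gauge V (e (t + h)) \<le> poly_gauge V (e t + h *\<^sub>R D t) + poly_gauge V R + poly_gauge V G"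
        unfolding eth using pg_sub[OF surj, of "e t + h *\<^sub>R D t + R" G] pg_sub[OF surj, of "e t + h *\<^sub>R D t" R]
        by linarith
      have step2: "poly_gauge V (e t + h *\<^sub>R D t) \<le> poly_gauge V (e t) - h * (eta_z * Ce t)"
        unfolding Ce_e using key[OF _ _ h(4)] mean_value_hull[OF f_deriv Jf_conv] h
        by (simp add: D_def e_def)
      have nR: "norm R \<le> \<epsilon>1 * h"
      proof -
        have "((\<lambda>s. D s - D t) has_integral R) (cbox t (t+h))"
          unfolding R_def cbox_interval
          by (intro integrable_integral Henstock_Kurzweil_Integration.integrable_diff iD) auto
        from has_integral_bound[OF less_imp_le[OF \<epsilon>1] this]
        show ?thesis using sub d1(2) h by (force simp: cbox_interval dist_norm intro: less_imp_le)
      qed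
      have step3: "poly_gauge V R \<le> Lc * (\<epsilon>1 * h)"
        using Lc(2)[of R] nR Lc(1) by (meson order.trans mult_left_mono less_imp_le)
      have step4: "poly_gauge V G \<le> eta_w * integral {t..t+h} W"
      proof -
        have a1: "((\<lambda>s. B *v (w1 s - w2 s)) has_integral G) {t..t+h}"
          unfolding G_def g_def using ig by (simp add: g_def integrable_integral)
        have a2: "((\<lambda>s. l1norm (w1 s - w2 s)) has_integral integral {t..t+h} W) {t..t+h}"
          unfolding W_def using integrable_on_subinterval[OF Wint, of t "t+h"] t
          by (intro integrable_integral) auto
        show ?thesis using pg_integral_B[OF a1 a2] h by simp
      qed
      have Cc: "integral {0..t+h} Ce = integral {0..t} Ce + integral {t..t+h} Ce"
        using t h by (intro Henstock_Kurzweil_Integration.integral_combine[symmetric] intCe) auto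
      have Wc: "integral {0..t+h} W = integral {0..t} W + integral {t..t+h} W"
        using t h by (intro Henstock_Kurzweil_Integration.integral_combine[symmetric] intW) auto
      have Cb: "integral {t..t+h} Ce \<le> h * (Ce t + \<epsilon> / 2)"
      proof -
        have "integral {t..t+h} Ce \<le> integral {t..t+h} (\<lambda>s. Ce t + \<epsilon> / 2)"
        proof (rule integral_le)
          show "Ce integrable_on {t..t+h}" using t h by (intro intCe) auto
          show "(\<lambda>s. Ce t + \<epsilon> / 2) integrable_on {t..t+h}" by (rule integrable_const_ivl)
          fix s assume s: "s \<in> {t..t+h}"
          have "dist (Ce s) (Ce t) < \<epsilon> / 2" using sub[OF s] d2(2) by blast
          then show "Ce s \<le> Ce t + \<epsilon> / 2" unfolding dist_real_def by linarith
        qed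
        then show ?thesis using h by simp
      qed
      have "poly_gauge V (e (t + h)) / eta_z \<le> poly_gauge V (e t) / eta_z - h * Ce t + (Lc * (\<epsilon>1 * h)) / eta_z + \<gamma> * integral {t..t+h} W"
      proof -
        have "poly_gauge V (e (t + h)) \<le> poly_gauge V (e t) - h * (eta_z * Ce t) + Lc * (\<epsilon>1 * h) + eta_w * integral {t..t+h} W"
          using step1 step2 step3 step4 by linarith
        then have "poly_gauge V (e (t + h)) / eta_z \<le> (poly_gauge V (e t) - h * (eta_z * Ce t) + Lc * (\<epsilon>1 * h) + eta_w * integral {t..t+h} W) / eta_z"
          using eta_z_pos by (intro divide_right_mono) auto
        also have "\<dots> = poly_gauge V (e t) / eta_z - h * Ce t + (Lc * (\<epsilon>1 * h)) / eta_z + \<gamma> * integral {t..t+h} W"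
          using eta_z_pos by (simp add: \<gamma>_def add_divide_distrib diff_divide_distrib)
        finally show ?thesis .
      qed
      moreover have "(Lc * (\<epsilon>1 * h)) / eta_z = \<epsilon> * h / 2"
        using Lc(1) eta_z_pos by (simp add: \<epsilon>1_def field_simps)
      ultimately show "F (t + h) - F t \<le> \<epsilon> * h"
        unfolding F_def using Cc Wc Cb by (simp add: algebra_simps)
    qed
  qed
  then have "integral {0..T} Ce \<le> \<gamma> * integral {0..T} W - poly_gauge V (e T) / eta_z"
    unfolding F0 by (simp add: F_def)
  moreover have "0 \<le> poly_gauge V (e T) / eta_z" using pg_nonneg[OF surj] eta_z_pos by simp
  ultimately show ?thesis using intCe[OF order.refl T order.refl] by (simp add: Ce_def W_def \<gamma>_def)
qed

lemma part2:
  fixes w1 w2 :: "real \<Rightarrow> real^'w" and x1 x2 :: "real \<Rightarrow> real^'n"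
  assumes sol1: "is_solution f B w1 x1" and sol2: "is_solution f B w2 x2"
    and Wint: "(\<lambda>t. l1norm (w1 t - w2 t)) integrable_on {0..}"
  shows "(\<lambda>t. l1norm (C *v x1 t - C *v x2 t)) integrable_on {0..} \<and>
         integral {0..} (\<lambda>t. l1norm (C *v x1 t - C *v x2 t))
           \<le> (eta_w / eta_z) * integral {0..} (\<lambda>t. l1norm (w1 t - w2 t))"
proof -
  define Ce where "Ce = (\<lambda>t. l1norm (C *v x1 t - C *v x2 t))"
  define W where "W = (\<lambda>t. l1norm (w1 t - w2 t))"
  define Bd where "Bd = (eta_w / eta_z) * integral {0..} W"
  define I where "I = (\<lambda>y. integral {0..y} Ce)"
  have g0: "eta_w / eta_z \<ge> 0" using eta_w_nonneg eta_z_pos by simp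
  have intC: "Ce integrable_on {0..y}" for y
  proof (cases "0 \<le> y")
    case True then show ?thesis using part2_T[OF sol1 sol2 Wint True] by (simp add: Ce_def)
  next
    case False then have "{0..y} = {}" by auto
    then show ?thesis using integrable_on_empty by metis
  qed
  have intW: "W integrable_on {0..y}" for y
    unfolding W_def by (rule integrable_on_subinterval[OF Wint]) auto
  have Wi: "W integrable_on {0..}" using Wint by (simp add: W_def)
  have Bd0: "0 \<le> Bd" unfolding Bd_def using g0
    by (intro mult_nonneg_nonneg Henstock_Kurzweil_Integration.integral_nonneg Wi) (auto simp: W_def l1_nonneg)
  have IB: "I y \<le> Bd" for y
  proof (cases "0 \<le> y")
    case True
    have "I y \<le> (eta_w / eta_z) * integral {0..y} W"
      using part2_T[OF sol1 sol2 Wint True] by (simp add: I_def Ce_def W_def)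
    also have "\<dots> \<le> Bd" unfolding Bd_def using g0
      by (intro mult_left_mono integral_subset_le intW Wi) (auto simp: W_def l1_nonneg)
    finally show ?thesis .
  next
    case False then have "{0..y} = {}" by auto
    then show ?thesis using Bd0 by (simp add: I_def)
  qed
  have Imono: "I y1 \<le> I y2" if "y1 \<le> y2" for y1 y2
    unfolding I_def using that by (intro integral_subset_le intC) (auto simp: Ce_def l1_nonneg)
  define l where "l = Sup (range I)"
  have bdd: "bdd_above (range I)" using IB by (intro bdd_aboveI[of _ Bd]) auto
  have lim: "(I \<longlongrightarrow> l) at_top"
  proof (rule order_tendstoI)
    fix y assume "y < l"
    then obtain z where "z \<in> range I" "y < z" unfolding l_def using less_cSup_iff[of "range I" y] bdd by auto
    then obtain y0 where y0: "y < I y0" by auto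
    show "eventually (\<lambda>x. y < I x) at_top"
      unfolding eventually_at_top_linorder using y0 Imono by (intro exI[of _ y0]) (auto intro: less_le_trans)
  next
    fix y assume "l < y"
    then show "eventually (\<lambda>x. I x < y) at_top"
      using cSup_upper[OF _ bdd] unfolding l_def by (intro always_eventually) (auto intro: le_less_trans)
  qed
  have hi: "(Ce has_integral l) {0..}"
    by (rule has_integral_to_inf[OF intC]) (use lim in \<open>auto simp: I_def Ce_def l1_nonneg\<close>)
  have "l \<le> Bd" unfolding l_def using IB by (intro cSup_least) auto
  then show ?thesis using hi by (auto simp: Ce_def W_def Bd_def integral_unique)
qed

end

theorem theorem1:
  fixes f :: "real ^ 'n \<Rightarrow> real ^ 'n"
    and Jf :: "real ^ 'n \<Rightarrow> real ^ 'n ^ 'n"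
    and B :: "real ^ 'w ^ 'n"
    and C :: "real ^ 'n ^ 'z"
    and A :: "'k::finite \<Rightarrow> real ^ 'n ^ 'n"
    and V :: "real ^ 'm ^ 'n"
    and P :: "real ^ ('w + 'w) ^ 'm"
    and M :: "'k \<Rightarrow> real ^ 'm ^ 'm"
    and eta_w eta_z :: real
  assumes f_deriv: "\<And>x. (f has_derivative (\<lambda>h. Jf x *v h)) (at x)"
    and Jf_cont: "continuous_on UNIV Jf"
    and Jf_conv: "\<And>x. Jf x \<in> convex hull (range A)"
    and P_nonneg: "\<And>i j. 0 \<le> P $ i $ j"
    and BP: "blockBmB B = V ** P"
    and P_colsum: "\<And>j. eta_w = (\<Sum>i\<in>UNIV. P $ i $ j)"
    and eta_z_pos: "eta_z > 0"
    and M_metzler: "\<And>l i j. i \<noteq> j \<Longrightarrow> 0 \<le> M l $ i $ j"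
    and AV: "\<And>l. A l ** V = V ** M l"
    and M_colsum: "\<And>l j. - eta_z * l1norm (C *v column j V) = (\<Sum>i\<in>UNIV. M l $ i $ j)"
    and V_compact: "compact (convex hull (range (\<lambda>j. column j V)))"
    and V_interior: "0 \<in> interior (convex hull (range (\<lambda>j. column j V)))"
  shows "(\<forall>x1 x2 :: real ^ 'n. \<forall>w1 w2 :: real ^ 'w.
            Dplus (\<lambda>x. poly_gauge V x / eta_z) (x1 - x2) (f x1 - f x2 + B *v (w1 - w2))
              \<le> - l1norm (C *v (x1 - x2)) + (eta_w / eta_z) * l1norm (w1 - w2))
       \<and> (\<forall>(w1 :: real \<Rightarrow> real ^ 'w) w2 (x1 :: real \<Rightarrow> real ^ 'n) x2.
            is_solution f B w1 x1 \<and> is_solution f B w2 x2 \<and>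
            (\<lambda>t. l1norm (w1 t - w2 t)) integrable_on {0..}
            \<longrightarrow> (\<lambda>t. l1norm (C *v x1 t - C *v x2 t)) integrable_on {0..} \<and>
                integral {0..} (\<lambda>t. l1norm (C *v x1 t - C *v x2 t))
                  \<le> (eta_w / eta_z) * integral {0..} (\<lambda>t. l1norm (w1 t - w2 t)))"
proof -
  interpret sys f Jf B C A V P M eta_w eta_z
    using f_deriv Jf_conv P_nonneg BP P_colsum eta_z_pos M_metzler AV M_colsum V_interior
    by (intro sys.intro) auto
  show ?thesis using part1 part2 by blast
qed

end
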